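(* Assume the standing setup below. Let $\theta\in\mathbb{R}^{|\mathcal{V}|}$ with $\theta_i\ge0$ for all $i$, let $\mathbf{x}\in\mathcal{S}_\rho$, and let $(i,j)\in\mathcal{A}$ satisfy $u_i(\theta_i)\ge u_j(0)$. If $\mathbf{x}_i\in[0,\theta_i]$, then $\delta_{ij}(\mathbf{x})=0$ both for SSD and for NBRD. If moreover $\mathbf{z}^*_i(\mathbf{x})\in[0,\theta_i]$, where $\mathbf{z}^*(\mathbf{x})$ is the (unique) $\mathbf{z}$-part of any optimizer of $\mathbf{P}_3$, then $\mathbf{d}^*_{ij}=0$ for every optimizer $(\mathbf{z}^*,\mathbf{d}^* )$ of $\mathbf{P}_3$ (i.e. $\delta_{ij}(\mathbf{x})=0$ for NRPM as well).
   Context: Standing setup: $\mathcal{G}=(\mathcal{V},\mathcal{E})$ is a finite, connected, undirected graph; $\mathcal{N}^i$ is the neighbour set of $i$ and $\overline{\mathcal{N}}^i=\mathcal{N}^i\cup\{i\}$; $\mathcal{A}=\bigcup_{\{i,j\}\in\mathcal{E}}\{(i,j),(j,i)\}$ is the associated arc set. For $\rho\ge0$, $\mathcal{S}_\rho=\{\mathbf{x}\ge0:\sum_i\mathbf{x}_i=\rho\}$. For each node $i$, $p_i:[0,\infty)\to\mathbb{R}$ is twice continuously differentiable and strictly concave, and $u_i:=p_i'$ (right derivative at $0$), strictly decreasing. $U(\mathbf{x})=\sum_i[p_i(\mathbf{x}_i)-p_i(0)]$. All three dynamics have the form $\dot{\mathbf{x}}_i=\sum_{j\in\mathcal{N}^i}(\delta_{ji}(\mathbf{x})-\delta_{ij}(\mathbf{x}))$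 with flows $\delta_{ij}\ge0$ on arcs $(i,j)\in\mathcal{A}$. SSD (stratified Smith dynamics): $\delta_{ij}=\max\{u_j(\mathbf{x}_j)(\mathbf{x}_i-y_{ij})-(p_i(\mathbf{x}_i)-p_i(y_{ij})),0\}$, where $y_{ij}=0$ if $u_j(\mathbf{x}_j)\ge u_i(0)$, $y_{ij}=\mathbf{x}_i$ if $u_j(\mathbf{x}_j)\le u_i(\mathbf{x}_i)$, and otherwise $y_{ij}$ is the unique $y\in(0,\mathbf{x}_i)$ with $u_i(y)=u_j(\mathbf{x}_j)$. NBRD (nodal best response dynamics): $\delta_{ij}=\mathbf{d}^*_{ij}$, where $\{\mathbf{d}^*_{ij}\}_{j\in\overline{\mathcal{N}}^i}$ is the optimizer of $\mathbf{P}_2^i$: maximize $\sum_{j\in\mathcal{N}^i}[p_j(\mathbf{x}_j+\mathbf{d}_{ij})-p_j(\mathbf{x}_j)]+[p_i(\mathbf{d}_{ii})-p_i(0)]$ subject to $\mathbf{d}_{ii}+\sum_{j\in\mathcal{N}^i}\mathbf{d}_{ij}=\mathbf{x}_i$, $\mathbf{d}_{ij}\ge0$ for $j\in\overline{\mathcal{N}}^i$. NRPM (network restricted payoff maximization): $\mathbf{P}_3$ is: maximize $U(\mathbf{z})$ over $(\mathbf{z},\mathbf{d})$ subject to $\mathbf{z}_i=\mathbf{x}_i+\sum_{j\in\overline{\mathcal{N}}^i}(\mathbf{d}_{ji}-\mathbf{d}_{ij})$ for all $i$, $\sum_{j\in\overline{\mathcal{N}}^i}\mathbf{d}_{ij}=\mathbf{x}_i$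 for all $i$, and $\mathbf{d}_{ij}\ge0$ for all $(i,j)\in\mathcal{A}\cup\{(i,i):i\in\mathcal{V}\}$. The $\mathbf{z}$-component $\mathbf{z}^*(\mathbf{x})$ of optimizers is unique, the NRPM dynamics is $\dot{\mathbf{x}}=\mathbf{z}^*(\mathbf{x})-\mathbf{x}$, and its arc flows are $\delta_{ij}=\mathbf{d}^*_{ij}$ for an optimizer $(\mathbf{z}^*,\mathbf{d}^* )$. *)

theory Defs
  imports "HOL-Analysis.Analysis"
begin

definition strictly_concave_on :: "real set \<Rightarrow> (real \<Rightarrow> real) \<Rightarrow> bool" where
  "strictly_concave_on S f \<longleftrightarrow> convex S \<and>
     (\<forall>x\<in>S. \<forall>y\<in>S. \<forall>t::real. x \<noteq> y \<and> 0 < t \<and> t < 1 \<longrightarrow>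
        f ((1 - t) * x + t * y) > (1 - t) * f x + t * f y)"

definition graph_ok :: "('v::finite \<Rightarrow> 'v \<Rightarrow> bool) \<Rightarrow> bool" where
  "graph_ok E \<longleftrightarrow> (\<forall>a b. E a b \<longrightarrow> E b a) \<and> (\<forall>a. \<not> E a a) \<and> (\<forall>a b. E\<^sup>*\<^sup>* a b)"

definition nbr :: "('v \<Rightarrow> 'v \<Rightarrow> bool) \<Rightarrow> 'v \<Rightarrow> 'v set" where
  "nbr E i = {j. E i j}"

definition cnbr :: "('v \<Rightarrow> 'v \<Rightarrow> bool) \<Rightarrow> 'v \<Rightarrow> 'v set" where
  "cnbr E i = insert i (nbr E i)"

definition arcs :: "('v \<Rightarrow> 'v \<Rightarrow> bool) \<Rightarrow> ('v \<times> 'v) set" where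
  "arcs E = {(i, j). E i j}"

(* Standing payoff assumptions: each p_i is C^2 on [0,\<infinity>) and strictly concave,
   u_i = p_i' (one-sided derivative at 0). *)
definition payoff_ok :: "('v \<Rightarrow> real \<Rightarrow> real) \<Rightarrow> ('v \<Rightarrow> real \<Rightarrow> real) \<Rightarrow> bool" where
  "payoff_ok p u \<longleftrightarrow> (\<forall>i.
      (\<forall>x\<ge>0. (p i has_real_derivative u i x) (at x within {0..})) \<and>
      (\<exists>u'. (\<forall>x\<ge>0. (u i has_real_derivative u' x) (at x within {0..})) \<and>
            continuous_on {0..} u') \<and>
      strictly_concave_on {0..} (p i))"

definition S_rho :: "real \<Rightarrow> ('v::finite \<Rightarrow> real) set" where
  "S_rho \<rho> = {x. (\<forall>i. x i \<ge> 0) \<and> (\<Sum>i\<in>UNIV. x i) = \<rho>}"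

definition U :: "('v::finite \<Rightarrow> real \<Rightarrow> real) \<Rightarrow> ('v \<Rightarrow> real) \<Rightarrow> real" where
  "U p z = (\<Sum>i\<in>UNIV. p i (z i) - p i 0)"

definition ssd_y :: "('v \<Rightarrow> real \<Rightarrow> real) \<Rightarrow> 'v \<Rightarrow> 'v \<Rightarrow> ('v \<Rightarrow> real) \<Rightarrow> real" where
  "ssd_y u i j x =
     (if u j (x j) \<ge> u i 0 then 0
      else if u j (x j) \<le> u i (x i) then x i
      else (THE y. 0 < y \<and> y < x i \<and> u i y = u j (x j)))"

definition ssd_flow :: "('v \<Rightarrow> real \<Rightarrow> real) \<Rightarrow> ('v \<Rightarrow> real \<Rightarrow> real) \<Rightarrow> 'v \<Rightarrow> 'v \<Rightarrow> ('v \<Rightarrow> real) \<Rightarrow> real" where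
  "ssd_flow p u i j x =
     max (u j (x j) * (x i - ssd_y u i j x) - (p i (x i) - p i (ssd_y u i j x))) 0"

(* NBRD: problem P_2^i; d j plays the role of d_{ij} for j in the closed neighbourhood *)
definition P2_feasible :: "('v \<Rightarrow> 'v \<Rightarrow> bool) \<Rightarrow> 'v \<Rightarrow> ('v \<Rightarrow> real) \<Rightarrow> ('v \<Rightarrow> real) \<Rightarrow> bool" where
  "P2_feasible E i x d \<longleftrightarrow>
     d i + (\<Sum>j\<in>nbr E i. d j) = x i \<and> (\<forall>j\<in>cnbr E i. d j \<ge> 0)"

definition P2_obj :: "('v \<Rightarrow> 'v \<Rightarrow> bool) \<Rightarrow> ('v \<Rightarrow> real \<Rightarrow> real) \<Rightarrow> 'v \<Rightarrow> ('v \<Rightarrow> real) \<Rightarrow> ('v \<Rightarrow> real) \<Rightarrow> real" where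
  "P2_obj E p i x d = (\<Sum>j\<in>nbr E i. p j (x j + d j) - p j (x j)) + (p i (d i) - p i 0)"

definition P2_optimal :: "('v \<Rightarrow> 'v \<Rightarrow> bool) \<Rightarrow> ('v \<Rightarrow> real \<Rightarrow> real) \<Rightarrow> 'v \<Rightarrow> ('v \<Rightarrow> real) \<Rightarrow> ('v \<Rightarrow> real) \<Rightarrow> bool" where
  "P2_optimal E p i x d \<longleftrightarrow> P2_feasible E i x d \<and>
     (\<forall>d'. P2_feasible E i x d' \<longrightarrow> P2_obj E p i x d' \<le> P2_obj E p i x d)"

(* NRPM: problem P_3; d i j = d_{ij} (only entries on arcs and diagonal are used) *)
definition P3_feasible :: "('v \<Rightarrow> 'v \<Rightarrow> bool) \<Rightarrow> ('v \<Rightarrow> real) \<Rightarrow> ('v \<Rightarrow> real) \<Rightarrow> ('v \<Rightarrow> 'v \<Rightarrow> real) \<Rightarrow> bool" where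
  "P3_feasible E x z d \<longleftrightarrow>
     (\<forall>i. z i = x i + (\<Sum>j\<in>cnbr E i. d j i - d i j)) \<and>
     (\<forall>i. (\<Sum>j\<in>cnbr E i. d i j) = x i) \<and>
     (\<forall>i j. ((i, j) \<in> arcs E \<or> i = j) \<longrightarrow> d i j \<ge> 0)"

definition P3_optimal :: "('v::finite \<Rightarrow> 'v \<Rightarrow> bool) \<Rightarrow> ('v \<Rightarrow> real \<Rightarrow> real) \<Rightarrow> ('v \<Rightarrow> real) \<Rightarrow> ('v \<Rightarrow> real) \<Rightarrow> ('v \<Rightarrow> 'v \<Rightarrow> real) \<Rightarrow> bool" where
  "P3_optimal E p x z d \<longleftrightarrow> P3_feasible E x z d \<and>
     (\<forall>z' d'. P3_feasible E x z' d' \<longrightarrow> U p z' \<le> U p z)"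

end

theory Submission imports Defs begin

lemma weak_tangent:
  fixes f :: "real \<Rightarrow> real"
  assumes sc: "strictly_concave_on {0..} f"
    and d: "(f has_real_derivative D) (at c within {0..})" and c: "0 \<le> c" and y: "0 \<le> y"
  shows "f y \<le> f c + D * (y - c)"
proof (cases "y = c")
  case False
  have conc: "(1-t)*f c + t* f y \<le> f ((1-t)*c + t*y)" if "0<t" "t<1" for t
    using sc False that c y unfolding strictly_concave_on_def
    by (metis atLeast_iff less_imp_le)
  have ev: "\<forall>\<^sub>F t in at_right (0::real). 0 < t \<and> t < 1"
    unfolding eventually_at_right_field by (intro exI[of _ 1]) auto
  have lim0: "((\<lambda>w. (f w - f c)/(w - c)) \<longlongrightarrow> D) (at c within {0..})"
    using d by (simp add: has_field_derivative_iff)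
  have fl: "filterlim (\<lambda>t. c + t*(y-c)) (at c within {0..}) (at_right 0)"
    unfolding filterlim_at
  proof
    show "\<forall>\<^sub>F t in at_right 0. c + t * (y - c) \<in> {0..} \<and> c + t * (y - c) \<noteq> c"
      using ev
    proof (rule eventually_mono)
      fix t :: real assume t: "0 < t \<and> t < 1"
      have "c + t*(y-c) = (1-t)*c + t*y" by (simp add: algebra_simps)
      moreover have "(1-t)*c + t*y \<ge> 0" using t c y by simp
      ultimately show "c + t * (y - c) \<in> {0..} \<and> c + t * (y - c) \<noteq> c"
        using t False by auto
    qed
    have "((\<lambda>t. c + t*(y-c)) \<longlongrightarrow> c + 0*(y-c)) (at_right 0)"
      by (intro tendsto_intros)
    then show "((\<lambda>t. c + t*(y-c)) \<longlongrightarrow> c) (at_right 0)" by simp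
  qed
  have lim1: "((\<lambda>t. (f (c + t*(y-c)) - f c)/((c + t*(y-c)) - c)) \<longlongrightarrow> D) (at_right 0)"
    using filterlim_compose[OF lim0 fl] by simp
  have lim2: "((\<lambda>t. ((f (c + t*(y-c)) - f c)/((c + t*(y-c)) - c)) * (y - c)) \<longlongrightarrow> D * (y-c)) (at_right 0)"
    by (intro tendsto_intros lim1)
  have lim3: "((\<lambda>t. (f (c + t*(y-c)) - f c)/t) \<longlongrightarrow> D * (y-c)) (at_right 0)"
  proof (rule Lim_transform_eventually[OF lim2])
    show "\<forall>\<^sub>F t in at_right 0. (f (c + t * (y - c)) - f c) / (c + t * (y - c) - c) * (y - c) =
         (f (c + t * (y - c)) - f c) / t"
      using ev by (rule eventually_mono) (use False in auto)
  qed
  have low: "\<forall>\<^sub>F t in at_right 0. f y - f c \<le> (f (c + t*(y-c)) - f c)/t"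
    using ev
  proof (rule eventually_mono)
    fix t :: real assume t: "0 < t \<and> t < 1"
    have "c + t*(y-c) = (1-t)*c + t*y" by (simp add: algebra_simps)
    then have "(1-t)*f c + t* f y \<le> f (c + t*(y-c))" using conc t by simp
    then have "t * (f y - f c) \<le> f (c + t*(y-c)) - f c" by (simp add: algebra_simps)
    then show "f y - f c \<le> (f (c + t*(y-c)) - f c)/t" using t by (simp add: field_simps)
  qed
  have "f y - f c \<le> D * (y - c)"
    by (rule tendsto_lowerbound[OF lim3 low]) simp
  then show ?thesis by simp
qed simp

lemma strict_tangent:
  fixes f :: "real \<Rightarrow> real"
  assumes sc: "strictly_concave_on {0..} f"
    and d: "(f has_real_derivative D) (at c within {0..})" and c: "0 \<le> c" and y: "0 \<le> y"
    and ne: "y \<noteq> c"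
  shows "f y < f c + D * (y - c)"
proof -
  have "f ((1 - 1/2) * c + (1/2) * y) > (1 - 1/2) * f c + (1/2) * f y"
    using sc c y ne unfolding strictly_concave_on_def
    by (elim conjE ballE[of _ _ c] ballE[of _ _ y]) (auto dest!: spec[of _ "1/2"])
  moreover have "f ((1 - 1/2) * c + (1/2) * y) \<le> f c + D * ((1 - 1/2) * c + (1/2) * y - c)"
    by (rule weak_tangent[OF sc d c]) (use c y in simp)
  ultimately show ?thesis by (simp add: algebra_simps)
qed

lemma tanw:
  assumes "payoff_ok p u" "0 \<le> c" "0 \<le> y"
  shows "p k y \<le> p k c + u k c * (y - c)"
  using assms weak_tangent unfolding payoff_ok_def by blast

lemma tans:
  assumes "payoff_ok p u" "0 \<le> c" "0 \<le> y" "y \<noteq> c"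
  shows "p k y < p k c + u k c * (y - c)"
  using assms strict_tangent unfolding payoff_ok_def by blast

lemma u_smono:
  assumes "payoff_ok p u" "0 \<le> a" "a < b"
  shows "u k b < u k a"
proof -
  have "p k b < p k a + u k a * (b - a)" using tans[OF assms(1,2)] assms by simp
  moreover have "p k a < p k b + u k b * (a - b)" using tans[OF assms(1)] assms by simp
  ultimately have "0 < (u k a - u k b) * (b - a)" by (simp add: algebra_simps)
  then show ?thesis using assms by (simp add: zero_less_mult_iff)
qed

lemma u_mono:
  assumes "payoff_ok p u" "0 \<le> a" "a \<le> b"
  shows "u k b \<le> u k a"
  using u_smono[OF assms(1,2), of b k] assms(3) by (cases "a = b") auto

lemma u_cont:
  assumes "payoff_ok p u" "0 \<le> a"
  shows "continuous (at a within {0..}) (u k)"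
proof -
  obtain u' where "\<forall>x\<ge>0. (u k has_real_derivative u' x) (at x within {0..})"
    using assms(1) unfolding payoff_ok_def by blast
  then show ?thesis using assms(2) DERIV_continuous by blast
qed

lemma part1:
  assumes "payoff_ok p u" "\<forall>k. x k \<ge> 0" "u i (\<theta> i) \<ge> u j 0" "x i \<le> \<theta> i"
  shows "ssd_flow p u i j x = 0"
proof -
  have xi: "0 \<le> x i" and xj: "0 \<le> x j" using assms(2) by auto
  have c1: "u j (x j) \<le> u j 0" using u_mono[OF assms(1) order_refl xj] .
  have c2: "u i (\<theta> i) \<le> u i (x i)" using u_mono[OF assms(1) xi assms(4)] .
  show ?thesis
  proof (cases "u j (x j) \<ge> u i 0")
    case True
    then have y: "ssd_y u i j x = 0" by (simp add: ssd_y_def)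
    have "p i 0 \<le> p i (x i) + u i (x i) * (0 - x i)" using tanw[OF assms(1) xi, of 0 i] by simp
    moreover have "u j (x j) * x i \<le> u i (x i) * x i"
      using c1 c2 assms(3) xi by (intro mult_right_mono) auto
    ultimately show ?thesis unfolding ssd_flow_def y by (simp add: algebra_simps)
  next
    case False
    then have y: "ssd_y u i j x = x i" using c1 c2 assms(3) by (simp add: ssd_y_def)
    show ?thesis unfolding ssd_flow_def y by simp
  qed
qed

lemma part2:
  fixes E :: "'v::finite \<Rightarrow> 'v \<Rightarrow> bool"
  assumes pu: "payoff_ok p u" and xn: "\<forall>k. x k \<ge> 0" and th: "u i (\<theta> i) \<ge> u j 0"
    and xt: "x i \<le> \<theta> i" and ij: "E i j" and ii: "\<not> E i i" and opt: "P2_optimal E p i x d"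
  shows "d j = 0"
proof (rule ccontr)
  assume ne: "d j \<noteq> 0"
  have feas: "d i + (\<Sum>l\<in>nbr E i. d l) = x i" and nn: "\<And>l. l \<in> cnbr E i \<Longrightarrow> d l \<ge> 0"
    using opt unfolding P2_optimal_def P2_feasible_def by auto
  have jn: "j \<in> nbr E i" using ij by (simp add: nbr_def)
  have inn: "i \<notin> nbr E i" using ii by (simp add: nbr_def)
  have fin: "finite (nbr E i)" by simp
  have dj: "d j > 0" using nn[of j] ne jn by (auto simp: cnbr_def)
  have di: "d i \<ge> 0" using nn[of i] by (simp add: cnbr_def)
  have ij_ne: "i \<noteq> j" using jn inn by auto
  define d' where "d' = (d(j := 0))(i := d i + d j)"
  have s1: "(\<Sum>l\<in>nbr E i. d l) = d j + (\<Sum>l\<in>nbr E i - {j}. d l)"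
    using sum.remove[OF fin jn] .
  have s2: "(\<Sum>l\<in>nbr E i. d' l) = d' j + (\<Sum>l\<in>nbr E i - {j}. d' l)"
    using sum.remove[OF fin jn] .
  have s3: "(\<Sum>l\<in>nbr E i - {j}. d' l) = (\<Sum>l\<in>nbr E i - {j}. d l)"
    by (rule sum.cong) (use inn in \<open>auto simp: d'_def\<close>)
  have "d j \<le> (\<Sum>l\<in>nbr E i. d l)"
    by (rule member_le_sum[OF jn _ fin]) (use nn in \<open>auto simp: cnbr_def\<close>)
  then have sle: "d i + d j \<le> x i" using feas by simp
  have feas': "P2_feasible E i x d'"
    unfolding P2_feasible_def
  proof
    show "d' i + (\<Sum>l\<in>nbr E i. d' l) = x i"
      using s1 s2 s3 feas ij_ne by (simp add: d'_def)
    show "\<forall>l\<in>cnbr E i. 0 \<le> d' l" using nn di dj by (auto simp: d'_def)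
  qed
  have o1: "(\<Sum>l\<in>nbr E i. p l (x l + d l) - p l (x l)) = (p j (x j + d j) - p j (x j)) + (\<Sum>l\<in>nbr E i - {j}. p l (x l + d l) - p l (x l))"
    using sum.remove[OF fin jn] .
  have o2: "(\<Sum>l\<in>nbr E i. p l (x l + d' l) - p l (x l)) = (p j (x j + d' j) - p j (x j)) + (\<Sum>l\<in>nbr E i - {j}. p l (x l + d' l) - p l (x l))"
    using sum.remove[OF fin jn] .
  have o3: "(\<Sum>l\<in>nbr E i - {j}. p l (x l + d' l) - p l (x l)) = (\<Sum>l\<in>nbr E i - {j}. p l (x l + d l) - p l (x l))"
    by (rule sum.cong) (use inn in \<open>auto simp: d'_def\<close>)
  have diff: "P2_obj E p i x d' - P2_obj E p i x d = (p i (d i + d j) - p i (d i)) - (p j (x j + d j) - p j (x j))"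
    unfolding P2_obj_def using o1 o2 o3 ij_ne by (simp add: d'_def)
  have t1: "p i (d i) < p i (d i + d j) + u i (d i + d j) * (d i - (d i + d j))"
    using tans[OF pu, of "d i + d j" "d i" i] di dj by simp
  have t2: "p j (x j + d j) < p j (x j) + u j (x j) * (x j + d j - x j)"
    using tans[OF pu, of "x j" "x j + d j" j] xn dj by simp
  have m1: "u i (\<theta> i) \<le> u i (d i + d j)" using u_mono[OF pu _ order.trans[OF sle xt], of i] di dj by simp
  have m2: "u j (x j) \<le> u j 0" using u_mono[OF pu order_refl, of "x j" j] xn by simp
  have "u j (x j) * d j \<le> u i (d i + d j) * d j"
    using m1 m2 th dj by (intro mult_right_mono) auto
  then have "P2_obj E p i x d' > P2_obj E p i x d" using diff t1 t2 by (simp add: algebra_simps)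
  moreover have "P2_obj E p i x d' \<le> P2_obj E p i x d" using opt feas' unfolding P2_optimal_def by blast
  ultimately show False by simp
qed

lemma part3:
  fixes E :: "'v::finite \<Rightarrow> 'v \<Rightarrow> bool"
  assumes pu: "payoff_ok p u" and th: "u i (\<theta> i) \<ge> u j 0"
    and ij: "E i j" and sym: "\<forall>a b. E a b \<longrightarrow> E b a" and ijne: "i \<noteq> j"
    and opt: "P3_optimal E p x z d" and zi0: "0 \<le> z i" and zit: "z i \<le> \<theta> i"
  shows "d i j = 0"
proof (rule ccontr)
  assume ne: "d i j \<noteq> 0"
  have zdef: "\<And>k. z k = x k + (\<Sum>l\<in>cnbr E k. d l k - d k l)"
    and row: "\<And>k. (\<Sum>l\<in>cnbr E k. d k l) = x k"
    and nn: "\<And>a b. (a, b) \<in> arcs E \<or> a = b \<Longrightarrow> d a b \<ge> 0"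
    using opt unfolding P3_optimal_def P3_feasible_def by auto
  have dij: "d i j > 0" using nn[of i j] ij ne by (auto simp: arcs_def)
  have zj_eq: "z j = (\<Sum>l\<in>cnbr E j. d l j)"
    using zdef[of j] row[of j] by (simp add: sum_subtractf)
  have ic: "i \<in> cnbr E j" using sym ij by (simp add: cnbr_def nbr_def)
  have jc: "j \<in> cnbr E i" using ij by (simp add: cnbr_def nbr_def)
  have "d i j \<le> (\<Sum>l\<in>cnbr E j. d l j)"
    by (rule member_le_sum[OF ic _ finite]) (use nn sym in \<open>auto simp: cnbr_def nbr_def arcs_def\<close>)
  then have zj: "d i j \<le> z j" using zj_eq by simp
  have zjpos: "0 < z j" using zj dij by simp
  have lt: "u j (z j / 2) < u i (z i)"
    using u_smono[OF pu order_refl, of "z j / 2" j] zjpos th u_mono[OF pu zi0 zit, of i] by simp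
  have "((u i) \<longlongrightarrow> u i (z i)) (at (z i) within {0..})"
    using u_cont[OF pu zi0, of i] by (simp add: continuous_within)
  then have "\<forall>\<^sub>F y in at (z i) within {0..}. u j (z j / 2) < u i y"
    using lt by (rule order_tendstoD(1))
  then obtain \<eta> where eta: "\<eta> > 0" and
    etaP: "\<And>y. y \<in> {0..} \<Longrightarrow> y \<noteq> z i \<Longrightarrow> dist y (z i) < \<eta> \<Longrightarrow> u j (z j / 2) < u i y"
    unfolding eventually_at by blast
  define \<epsilon> where "\<epsilon> = min (\<eta>/2) (min (d i j) (z j / 2))"
  have epos: "0 < \<epsilon>" and ele: "\<epsilon> \<le> d i j" and eeta: "\<epsilon> < \<eta>" and ez: "\<epsilon> \<le> z j / 2"
    using eta dij zjpos by (auto simp: \<epsilon>_def)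
  have ugt: "u j (z j / 2) < u i (z i + \<epsilon>)"
    by (rule etaP) (use zi0 epos eeta in \<open>auto simp: dist_real_def\<close>)
  define e :: "'v \<Rightarrow> 'v \<Rightarrow> real" where
    "e a b = (if a = i \<and> b = i then 1 else 0) - (if a = i \<and> b = j then 1 else 0)" for a b
  define d' where "d' a b = d a b + \<epsilon> * e a b" for a b
  define z' where "z' k = z k + \<epsilon> * ((if k = i then 1 else 0) - (if k = j then 1 else 0))" for k
  have esum: "(\<Sum>l\<in>cnbr E k. e l k - e k l) = (if k = i then 1 else 0) - (if k = j then 1 else 0)" for k
  proof -
    consider "k = i" | "k = j" | "k \<noteq> i" "k \<noteq> j" by blast
    then show ?thesis
    proof cases
      case 1
      have "(\<Sum>l\<in>cnbr E k. e l k - e k l) = (\<Sum>l\<in>cnbr E i. if l = j then 1 else 0)"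
        by (rule sum.cong) (use 1 ijne in \<open>auto simp: e_def\<close>)
      then show ?thesis using 1 jc ijne by simp
    next
      case 2
      have "(\<Sum>l\<in>cnbr E k. e l k - e k l) = (\<Sum>l\<in>cnbr E j. if l = i then -1 else 0)"
        by (rule sum.cong) (use 2 ijne in \<open>auto simp: e_def\<close>)
      then show ?thesis using 2 ic ijne by simp
    next
      case 3
      have "(\<Sum>l\<in>cnbr E k. e l k - e k l) = (\<Sum>l\<in>cnbr E k. 0)"
        by (rule sum.cong) (use 3 in \<open>auto simp: e_def\<close>)
      then show ?thesis using 3 by simp
    qed
  qed
  have erow: "(\<Sum>l\<in>cnbr E k. e k l) = 0" for k
  proof (cases "k = i")
    case True
    have "(\<Sum>l\<in>cnbr E k. e k l) = (\<Sum>l\<in>cnbr E i. (if l = i then 1 else 0) - (if l = j then 1 else 0))"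
      by (rule sum.cong) (use True in \<open>auto simp: e_def\<close>)
    also have "\<dots> = 0" using jc by (simp add: sum_subtractf cnbr_def)
    finally show ?thesis .
  next
    case False
    then show ?thesis by (simp add: e_def)
  qed
  have feas': "P3_feasible E x z' d'"
    unfolding P3_feasible_def
  proof (intro conjI allI impI)
    fix k
    have "(\<Sum>l\<in>cnbr E k. d' l k - d' k l) = (\<Sum>l\<in>cnbr E k. (d l k - d k l) + \<epsilon> * (e l k - e k l))"
      by (simp add: d'_def algebra_simps)
    also have "\<dots> = (\<Sum>l\<in>cnbr E k. d l k - d k l) + \<epsilon> * ((if k = i then 1 else 0) - (if k = j then 1 else 0))"
      by (simp add: sum.distrib sum_distrib_left[symmetric] esum)
    finally show "z' k = x k + (\<Sum>l\<in>cnbr E k. d' l k - d' k l)"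
      using zdef[of k] by (simp add: z'_def)
    have "(\<Sum>l\<in>cnbr E k. d' k l) = (\<Sum>l\<in>cnbr E k. d k l) + \<epsilon> * (\<Sum>l\<in>cnbr E k. e k l)"
      by (simp add: d'_def sum.distrib sum_distrib_left)
    then show "(\<Sum>l\<in>cnbr E k. d' k l) = x k" using row[of k] erow[of k] by simp
  next
    fix a b assume ab: "(a, b) \<in> arcs E \<or> a = b"
    show "0 \<le> d' a b"
      using nn[OF ab] ele epos nn[of i i] ijne by (auto simp: d'_def e_def)
  qed
  have pw: "p k (z' k) - p k (z k) = (if k = i then p i (z i + \<epsilon>) - p i (z i) else 0)
             + (if k = j then p j (z j - \<epsilon>) - p j (z j) else 0)" for k
    using ijne by (auto simp: z'_def)
  have "U p z' - U p z = (\<Sum>k\<in>UNIV. p k (z' k) - p k (z k))"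
    unfolding U_def by (simp add: sum_subtractf)
  also have "\<dots> = (p i (z i + \<epsilon>) - p i (z i)) + (p j (z j - \<epsilon>) - p j (z j))"
    unfolding pw by (simp add: sum.distrib)
  finally have Ud: "U p z' - U p z = (p i (z i + \<epsilon>) - p i (z i)) + (p j (z j - \<epsilon>) - p j (z j))" .
  have t1: "p i (z i) \<le> p i (z i + \<epsilon>) + u i (z i + \<epsilon>) * (z i - (z i + \<epsilon>))"
    using tanw[OF pu, of "z i + \<epsilon>" "z i" i] zi0 epos by simp
  have t2: "p j (z j) \<le> p j (z j - \<epsilon>) + u j (z j - \<epsilon>) * (z j - (z j - \<epsilon>))"
    using tanw[OF pu, of "z j - \<epsilon>" "z j" j] ez zjpos by simp
  have "u j (z j - \<epsilon>) \<le> u j (z j / 2)" using u_mono[OF pu, of "z j / 2" "z j - \<epsilon>" j] ez zjpos by simp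
  then have "u j (z j - \<epsilon>) * \<epsilon> < u i (z i + \<epsilon>) * \<epsilon>"
    using ugt epos by simp
  moreover have "p i (z i + \<epsilon>) - p i (z i) \<ge> u i (z i + \<epsilon>) * \<epsilon>" using t1 by (simp add: algebra_simps)
  moreover have "p j (z j) - p j (z j - \<epsilon>) \<le> u j (z j - \<epsilon>) * \<epsilon>" using t2 by (simp add: algebra_simps)
  ultimately have "U p z' > U p z" using Ud by linarith
  moreover have "U p z' \<le> U p z" using opt feas' unfolding P3_optimal_def by blast
  ultimately show False by simp
qed

theorem mainTheorem5:
  fixes E :: "'v::finite \<Rightarrow> 'v \<Rightarrow> bool"
    and p u :: "'v \<Rightarrow> real \<Rightarrow> real"
    and \<theta> x :: "'v \<Rightarrow> real" and \<rho> :: real and i j :: 'v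
  assumes "graph_ok E"
    and "payoff_ok p u"
    and "\<rho> \<ge> 0"
    and "\<forall>k. \<theta> k \<ge> 0"
    and "x \<in> S_rho \<rho>"
    and "(i, j) \<in> arcs E"
    and "u i (\<theta> i) \<ge> u j 0"
    and "0 \<le> x i" and "x i \<le> \<theta> i"
  shows "ssd_flow p u i j x = 0
       \<and> (\<forall>d. P2_optimal E p i x d \<longrightarrow> d j = 0)
       \<and> (\<forall>z d. P3_optimal E p x z d \<and> 0 \<le> z i \<and> z i \<le> \<theta> i \<longrightarrow> d i j = 0)"
proof -
  have xn: "\<forall>k. x k \<ge> 0" using assms(5) by (simp add: S_rho_def)
  have ij: "E i j" using assms(6) by (simp add: arcs_def)
  have sym: "\<forall>a b. E a b \<longrightarrow> E b a" and irr: "\<forall>a. \<not> E a a"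
    using assms(1) by (auto simp: graph_ok_def)
  have ne: "i \<noteq> j" using ij irr by auto
  show ?thesis
    using part1[of p u x j i \<theta>, OF assms(2) xn assms(7,9)]
      part2[of p u x j i \<theta> E, OF assms(2) xn assms(7,9) ij] irr
      part3[of p u j i \<theta> E, OF assms(2,7) ij sym ne] by blast
qed

end
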